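(* Suppose that $\kappa = \nu^+$, and $J$ is a $\kappa$-complete ideal on $\kappa$ such that $\clubsuit_\kappa^{{\rm cof},-}[J]$ holds. Then there exist $A^i_\delta \in P_\nu(\kappa\times\kappa)$ for $\delta<\kappa$ and $i<\nu$ such that for any $F : \kappa\to\kappa$, the set $\{\delta<\kappa : \exists i<\nu\,\exists Z\subseteq\delta\,(\sup Z = \delta \text{ and } F|Z \subseteq A^i_\delta)\}$ lies in $J^+$ (where $F|Z$ is identified with its graph $\{(\alpha, F(\alpha)) : \alpha \in Z\}$).
   Context: An ideal on $\kappa$ is a nonempty $J \subseteq P(\kappa)$ with $\kappa \notin J$, every bounded subset of $\kappa$ in $J$, $J$ closed under subsets and under unions of two members; $J^+ = P(\kappa)\setminus J$; $\kappa$-complete means closed under unions of fewer than $\kappa$ members. $P_\rho(X) = \{x\subseteq X : |x|<\rho\}$. $\clubsuit_\kappa^{{\rm cof},-}[J]$: there are $B^i_\delta \in P_{|\delta|}(\delta)$ for $i<\delta<\kappa$ such that for every $W\subseteq\kappa$ of size $\kappa$, $\{\delta<\kappa : \exists i<\delta\,(\sup(W\cap B^i_\delta)=\delta)\}\in J^+$. *)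

theory Defs
  imports Main
begin

unbundle cardinal_syntax

text \<open>Ordinals below kappa are modelled by the field of a well-order r which is a
cardinal order (an initial ordinal); alpha < delta means alpha in underS r delta.\<close>

definition ord_sup_eq :: "'a rel \<Rightarrow> 'a set \<Rightarrow> 'a \<Rightarrow> bool" where
  "ord_sup_eq r Z d \<longleftrightarrow> d \<in> Field r \<and> (\<forall>g\<in>Z. (g, d) \<in> r) \<and>
     (\<forall>b\<in>underS r d. \<exists>g\<in>Z. (b, g) \<in> r \<and> b \<noteq> g)"

definition is_ideal_on :: "'a rel \<Rightarrow> 'a set set \<Rightarrow> bool" where
  "is_ideal_on r J \<longleftrightarrow>
     J \<noteq> {} \<and> J \<subseteq> Pow (Field r) \<and> Field r \<notin> J \<and>
     (\<forall>X. X \<subseteq> Field r \<and> (\<exists>b\<in>Field r. X \<subseteq> underS r b) \<longrightarrow> X \<in> J) \<and>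
     (\<forall>X Y. X \<in> J \<and> Y \<subseteq> X \<longrightarrow> Y \<in> J) \<and>
     (\<forall>X Y. X \<in> J \<and> Y \<in> J \<longrightarrow> X \<union> Y \<in> J)"

definition complete_ideal :: "'a rel \<Rightarrow> 'a set set \<Rightarrow> bool" where
  "complete_ideal r J \<longleftrightarrow> (\<forall>\<X>. \<X> \<subseteq> J \<and> card_of \<X> <o r \<longrightarrow> \<Union>\<X> \<in> J)"

definition ideal_pos :: "'a rel \<Rightarrow> 'a set set \<Rightarrow> 'a set set" where
  "ideal_pos r J = Pow (Field r) - J"

definition clubsuit_cof_minus :: "'a rel \<Rightarrow> 'a set set \<Rightarrow> bool" where
  "clubsuit_cof_minus r J \<longleftrightarrow>
     (\<exists>B :: 'a \<Rightarrow> 'a \<Rightarrow> 'a set.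
        (\<forall>d\<in>Field r. \<forall>i\<in>underS r d.
            B d i \<subseteq> underS r d \<and> card_of (B d i) <o card_of (underS r d)) \<and>
        (\<forall>W. W \<subseteq> Field r \<and> card_of W =o r \<longrightarrow>
            {d \<in> Field r. \<exists>i\<in>underS r d. ord_sup_eq r (W \<inter> B d i) d} \<in> ideal_pos r J))"

end

theory Submission
  imports Defs
begin

lemma lt_trans: "Well_order r \<Longrightarrow> a \<in> underS r b \<Longrightarrow> b \<in> underS r c \<Longrightarrow> a \<in> underS r c"
  by (metis (no_types, lifting) Order_Relation.underS_Field empty_iff
    in_AboveS_underS subsetD underS_empty underS_incl_iff wo_rel.LIN
    wo_rel.intro wo_rel.suc_greater wo_rel.suc_underS)

lemma le_lt_trans: "Well_order r \<Longrightarrow> (a,b) \<in> r \<Longrightarrow> b \<in> underS r c \<Longrightarrow> a \<in> underS r c"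
  by (smt (verit) empty_iff in_mono underS_E underS_I underS_empty
    underS_incl_iff wo_rel.LIN wo_rel.intro)

lemma lt_le_trans: "Well_order r \<Longrightarrow> a \<in> underS r b \<Longrightarrow> (b,c) \<in> r \<Longrightarrow> a \<in> underS r c"
  by (meson in_mono underS_incl_iff well_order_on_domain wo_rel.LIN
    wo_rel.intro)

lemma lt_total: "Well_order r \<Longrightarrow> a \<in> Field r \<Longrightarrow> b \<in> Field r \<Longrightarrow> (a,b) \<in> r \<or> b \<in> underS r a"
  by (metis underS_I wo_rel.in_notinI wo_rel.intro)

lemma lt_asym: "Well_order r \<Longrightarrow> a \<in> underS r b \<Longrightarrow> (b,a) \<in> r \<Longrightarrow> False"
  by (metis FieldI1 underS_E wo_rel.intro wo_rel.max2_equals1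
    wo_rel.max2_equals2)

lemma under_less: "Card_order r \<Longrightarrow> infinite (Field r) \<Longrightarrow> a \<in> Field r \<Longrightarrow> |under r a| <o r"
proof -
  assume r: "Card_order r" and inf: "infinite (Field r)" and a: "a \<in> Field r"
  have wo: "Well_order r" using r by (simp add: card_order_on_well_order_on)
  have eq: "under r a = underS r a \<union> {a}"
    using Refl_under_underS[OF _ a] wo by (simp add: well_order_on_def linear_order_on_def partial_order_on_def preorder_on_def)
  have 1: "|underS r a| <o r" by (rule card_of_underS[OF r a])
  have 2: "|{a}| <o r"
    by (rule finite_ordLess_infinite[OF card_of_Well_order wo]) (simp_all add: inf Field_card_of)
  show ?thesis unfolding eq using card_of_Un_ordLess_infinite_Field[OF inf r 1 2] .
qed


theorem lemma3p8:
  fixes r :: "'a rel" and nu :: "'b rel" and J :: "'a set set"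
  assumes "Card_order r" and "Card_order nu" and "r =o cardSuc nu"
    and "is_ideal_on r J" and "complete_ideal r J"
    and "clubsuit_cof_minus r J"
  shows "\<exists>A :: 'a \<Rightarrow> 'b \<Rightarrow> ('a \<times> 'a) set.
     (\<forall>d\<in>Field r. \<forall>i\<in>Field nu.
        A d i \<subseteq> Field r \<times> Field r \<and> card_of (A d i) <o nu) \<and>
     (\<forall>F :: 'a \<Rightarrow> 'a. F ` Field r \<subseteq> Field r \<longrightarrow>
        {d \<in> Field r. \<exists>i\<in>Field nu. \<exists>Z. Z \<subseteq> underS r d \<and> ord_sup_eq r Z d \<and>
            (\<lambda>a. (a, F a)) ` Z \<subseteq> A d i} \<in> ideal_pos r J)"
proof -
  have wo: "Well_order r" by (rule card_order_on_well_order_on[OF assms(1)])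
  have wonu: "Well_order nu" by (rule card_order_on_well_order_on[OF assms(2)])
  obtain B :: "'a \<Rightarrow> 'a \<Rightarrow> 'a set" where
    Bsz: "\<forall>d\<in>Field r. \<forall>i\<in>underS r d. B d i \<subseteq> underS r d \<and> |B d i| <o |underS r d|"
    and Bcl: "\<forall>W. W \<subseteq> Field r \<and> |W| =o r \<longrightarrow>
            {d \<in> Field r. \<exists>i\<in>underS r d. ord_sup_eq r (W \<inter> B d i) d} \<in> ideal_pos r J"
    using assms(6) unfolding clubsuit_cof_minus_def by blast
  have Jsub: "\<And>X Y. X \<in> J \<Longrightarrow> Y \<subseteq> X \<Longrightarrow> Y \<in> J"
    using assms(4) unfolding is_ideal_on_def by blast
  have Jne: "{} \<in> J"
    using assms(4) Jsub unfolding is_ideal_on_def by blast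
  have wf: "wf (r - Id)" using wo by (simp add: well_order_on_def)
  have inf: "infinite (Field r)"
  proof
    assume fin: "finite (Field r)"
    have "|Field r| =o r" by (rule card_of_Field_ordIso[OF assms(1)])
    then have "{d \<in> Field r. \<exists>i\<in>underS r d. ord_sup_eq r (Field r \<inter> B d i) d} \<in> ideal_pos r J"
      using Bcl[THEN spec, of "Field r"] by simp
    then have "{d \<in> Field r. \<exists>i\<in>underS r d. ord_sup_eq r (Field r \<inter> B d i) d} \<noteq> {}"
      using Jne unfolding ideal_pos_def by (metis DiffD2)
    then obtain \<delta> i where \<delta>: "\<delta> \<in> Field r" and i: "i \<in> underS r \<delta>"
      and sup: "ord_sup_eq r (Field r \<inter> B \<delta> i) \<delta>" by blast
    have Bs: "B \<delta> i \<subseteq> underS r \<delta>" using Bsz[rule_format, OF \<delta> i] by (rule conjunct1)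
    have nomax: "\<forall>b\<in>underS r \<delta>. \<exists>g\<in>underS r \<delta>. b \<in> underS r g"
      using sup Bs unfolding ord_sup_eq_def underS_def by blast
    define R where "R = {(g,b). b \<in> underS r \<delta> \<and> g \<in> underS r \<delta> \<and> b \<in> underS r g}"
    have finU: "finite (underS r \<delta>)" by (rule finite_subset[OF _ fin]) (auto intro: underS_Field)
    have "R \<subseteq> underS r \<delta> \<times> underS r \<delta>" unfolding R_def by auto
    then have finR: "finite R" using finU finite_subset by blast
    have "R \<subseteq> (r - Id)\<inverse>" unfolding R_def underS_def by auto
    moreover have "acyclic ((r - Id)\<inverse>)" using wf_acyclic[OF wf] acyclic_converse by blast
    ultimately have "acyclic R" using acyclic_subset by blast
    then have wfR: "wf R" using finite_acyclic_wf[OF finR] by simp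
    obtain z where z: "z \<in> underS r \<delta>" and zmin: "\<And>y. (y, z) \<in> R \<Longrightarrow> y \<notin> underS r \<delta>"
      using wfE_min[OF wfR i] by blast
    obtain g where "g \<in> underS r \<delta>" "z \<in> underS r g" using nomax z by blast
    then show False using zmin[of g] z unfolding R_def by blast
  qed
  have infnu: "infinite (Field nu)"
  proof
    assume "finite (Field nu)"
    then have f1: "finite (Field (cardSuc nu))" using cardSuc_finite[OF assms(2)] by simp
    have "cardSuc nu =o |Field (cardSuc nu)|"
      by (rule ordIso_symmetric[OF card_of_Field_ordIso[OF cardSuc_Card_order[OF assms(2)]]])
    then have rI: "r =o |Field (cardSuc nu)|" by (rule ordIso_transitive[OF assms(3)])
    then have "finite (Field r)" using card_of_ordIso_finite_Field[OF assms(1) rI] f1 by simp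
    then show False using inf by blast
  qed
  have Cnu: "Cinfinite nu" using infnu assms(2) by (simp add: cinfinite_def)
  have reg: "regularCard r"
    using regularCard_ordIso[OF ordIso_symmetric[OF assms(3)] Cinfinite_cardSuc[OF Cnu] regularCard_cardSuc[OF Cnu]] .
  have bound: "\<And>K. K \<subseteq> Field r \<Longrightarrow> |K| <o r \<Longrightarrow> \<exists>a\<in>Field r. \<forall>k\<in>K. (k,a) \<in> r"
  proof -
    fix K assume K: "K \<subseteq> Field r" and Kl: "|K| <o r"
    have "\<not> cofinal K r"
    proof
      assume "cofinal K r"
      then have "|K| =o r" using reg K unfolding regularCard_def by blast
      then show False using not_ordLess_ordIso[OF Kl] by blast
    qed
    then obtain a where a: "a \<in> Field r" and na: "\<forall>b\<in>K. \<not> (a \<noteq> b \<and> (a,b) \<in> r)"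
      unfolding cofinal_def by blast
    have "\<forall>k\<in>K. (k,a) \<in> r"
    proof
      fix k assume k: "k \<in> K"
      then have kF: "k \<in> Field r" using K by blast
      show "(k,a) \<in> r"
      proof (cases "k = a")
        case True
        then show ?thesis using a wo
          by (simp add: well_order_on_def linear_order_on_def partial_order_on_def preorder_on_def refl_on_def)
      next
        case False
        then show ?thesis using lt_total[OF wo a kF] na k unfolding underS_def by force
      qed
    qed
    then show "\<exists>a\<in>Field r. \<forall>k\<in>K. (k,a) \<in> r" using a by blast
  qed
  have FRne: "Field r \<noteq> {}" using inf by auto
  have le: "|Field r \<times> Field r| \<le>o |Field r|"
    using card_of_Times_same_infinite[OF inf, unfolded ordIso_iff_ordLeq] by (rule conjunct1)
  have ne2: "Field r \<times> Field r \<noteq> {}" using FRne by simp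
  have "|Field r \<times> (Field r \<times> Field r)| =o |Field r|"
    using card_of_Times_infinite[OF inf ne2 le] by (rule conjunct1)
  then have gI: "|Field r| =o |Field r \<times> (Field r \<times> Field r)|" by (rule ordIso_symmetric)
  then obtain g where g: "bij_betw g (Field r) (Field r \<times> (Field r \<times> Field r))"
    using card_of_ordIso[of "Field r" "Field r \<times> (Field r \<times> Field r)", THEN iffD2, OF gI] by blast
  define dd where "dd = (\<lambda>x. snd (g x))"
  have fib: "\<And>p a. p \<in> Field r \<times> Field r \<Longrightarrow> a \<in> Field r \<Longrightarrow> \<exists>\<gamma>\<in>Field r. a \<in> underS r \<gamma> \<and> dd \<gamma> = p"
  proof (rule ccontr)
    fix p a assume p: "p \<in> Field r \<times> Field r" and a: "a \<in> Field r"
      and no: "\<not> (\<exists>\<gamma>\<in>Field r. a \<in> underS r \<gamma> \<and> dd \<gamma> = p)"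
    have sub: "Field r \<times> {p} \<subseteq> g ` (under r a)"
    proof
      fix y assume y: "y \<in> Field r \<times> {p}"
      then have "y \<in> Field r \<times> (Field r \<times> Field r)" using p by blast
      then have "y \<in> g ` Field r" using g by (simp add: bij_betw_def)
      then obtain \<gamma> where \<gamma>: "\<gamma> \<in> Field r" "g \<gamma> = y" by (rule imageE) auto
      then have "dd \<gamma> = p" using y unfolding dd_def by auto
      then have "a \<notin> underS r \<gamma>" using no \<gamma> by blast
      then have "(\<gamma>, a) \<in> r" using lt_total[OF wo \<gamma>(1) a] by blast
      then show "y \<in> g ` (under r a)" using \<gamma> unfolding under_def by blast
    qed
    have "|Field r| \<le>o |Field r \<times> {p}|"
      by (rule card_of_Times1) simp
    also have "|Field r \<times> {p}| \<le>o |g ` (under r a)|" using sub by (rule card_of_mono1)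
    also have "|g ` (under r a)| \<le>o |under r a|" by (rule card_of_image)
    also have "|under r a| <o r" using under_less[OF assms(1) inf a] .
    finally have "|Field r| <o r" .
    then show False using not_ordLess_ordIso card_of_Field_ordIso[OF assms(1)] by blast
  qed
  have usle: "\<And>\<delta>. \<delta> \<in> Field r \<Longrightarrow> |underS r \<delta>| \<le>o |Field nu|"
  proof -
    fix \<delta> assume \<delta>: "\<delta> \<in> Field r"
    have "|underS r \<delta>| <o r" using card_of_underS[OF assms(1) \<delta>] .
    then have "|underS r \<delta>| <o cardSuc nu" by (rule ordLess_ordIso_trans[OF _ assms(3)])
    then have "|underS r \<delta>| \<le>o nu" by (rule cardSuc_ordLeq_ordLess[OF assms(2) card_of_Card_order, THEN iffD1])
    then show "|underS r \<delta>| \<le>o |Field nu|"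
      by (rule ordLeq_ordIso_trans[OF _ ordIso_symmetric[OF card_of_Field_ordIso[OF assms(2)]]])
  qed
  have enum: "\<And>\<delta>. \<delta> \<in> Field r \<Longrightarrow> underS r \<delta> \<noteq> {} \<Longrightarrow> \<exists>e. e ` Field nu = underS r \<delta>"
  proof -
    fix \<delta> assume a: "\<delta> \<in> Field r" and b: "underS r \<delta> \<noteq> {}"
    show "\<exists>e. e ` Field nu = underS r \<delta>"
      by (subst card_of_ordLeq2[OF b]) (rule usle[OF a])
  qed
  define e where "e \<delta> = (SOME e. e ` Field nu = underS r \<delta>)" for \<delta>
  define A where "A \<delta> i = (if e \<delta> i \<in> underS r \<delta> then dd ` B \<delta> (e \<delta> i) \<inter> (Field r \<times> Field r) else {})" for \<delta> i
  show ?thesis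
  proof (intro exI[of _ A] conjI ballI allI impI)
    fix \<delta> i assume \<delta>: "\<delta> \<in> Field r" and i: "i \<in> Field nu"
    show "A \<delta> i \<subseteq> Field r \<times> Field r" by (auto simp: A_def)
    show "|A \<delta> i| <o nu"
    proof (cases "e \<delta> i \<in> underS r \<delta>")
      case True
      have "A \<delta> i \<subseteq> dd ` B \<delta> (e \<delta> i)" using True unfolding A_def by auto
      then have "|A \<delta> i| \<le>o |dd ` B \<delta> (e \<delta> i)|" by (rule card_of_mono1)
      also have "|dd ` B \<delta> (e \<delta> i)| \<le>o |B \<delta> (e \<delta> i)|" by (rule card_of_image)
      also have "|B \<delta> (e \<delta> i)| <o |underS r \<delta>|" using Bsz[rule_format, OF \<delta> True] by (rule conjunct2)
      also have "|underS r \<delta>| \<le>o |Field nu|" using usle \<delta> .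
      also have "|Field nu| =o nu" using card_of_Field_ordIso[OF assms(2)] .
      finally show ?thesis .
    next
      case False
      then have "A \<delta> i = {}" by (simp add: A_def)
      moreover have "|{}::('a\<times>'a) set| <o nu"
        by (rule finite_ordLess_infinite[OF card_of_Well_order wonu]) (simp_all add: infnu Field_card_of)
      ultimately show ?thesis by simp
    qed
  next
    fix F :: "'a \<Rightarrow> 'a" assume F: "F ` Field r \<subseteq> Field r"
    define ub where "ub U = (SOME a. a \<in> Field r \<and> (\<forall>u\<in>U. (u,a) \<in> r))" for U
    define code where "code a = (SOME \<gamma>. \<gamma> \<in> Field r \<and> a \<in> underS r \<gamma> \<and> dd \<gamma> = (a, F a))" for a
    define H where "H f \<xi> = code (ub (f ` underS r \<xi>))" for f :: "'a \<Rightarrow> 'a" and \<xi>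
    define w where "w = wfrec (r - Id) H"
    have weq: "w \<xi> = code (ub (w ` underS r \<xi>))" for \<xi>
    proof -
      have "w \<xi> = H (cut w (r - Id) \<xi>) \<xi>" unfolding w_def by (rule wfrec[OF wf])
      moreover have "(cut w (r - Id) \<xi>) ` underS r \<xi> = w ` underS r \<xi>"
        by (rule image_cong) (auto simp: cut_apply underS_def)
      ultimately show ?thesis by (simp add: H_def)
    qed
    define al where "al \<xi> = ub (w ` underS r \<xi>)" for \<xi>
    have P: "al \<xi> \<in> Field r \<and> (\<forall>\<zeta>\<in>underS r \<xi>. (w \<zeta>, al \<xi>) \<in> r) \<and> w \<xi> \<in> Field r
          \<and> al \<xi> \<in> underS r (w \<xi>) \<and> dd (w \<xi>) = (al \<xi>, F (al \<xi>))" if "\<xi> \<in> Field r" for \<xi>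
      using that
    proof (induction \<xi> rule: wf_induct_rule[OF wf])
      case (1 \<xi>)
      have K: "w ` underS r \<xi> \<subseteq> Field r"
      proof
        fix y assume "y \<in> w ` underS r \<xi>"
        then obtain \<zeta> where \<zeta>: "\<zeta> \<in> underS r \<xi>" "y = w \<zeta>" by blast
        then have "(\<zeta>, \<xi>) \<in> r - Id" "\<zeta> \<in> Field r" unfolding underS_def by (auto intro: FieldI1)
        then show "y \<in> Field r" using 1 \<zeta> by blast
      qed
      have "|w ` underS r \<xi>| \<le>o |underS r \<xi>|" by (rule card_of_image)
      also have "|underS r \<xi>| <o r" using card_of_underS[OF assms(1) 1(2)] .
      finally have "\<exists>a\<in>Field r. \<forall>k\<in>w ` underS r \<xi>. (k,a) \<in> r" by (rule bound[OF K])
      then obtain a0 where "a0 \<in> Field r \<and> (\<forall>u\<in>w ` underS r \<xi>. (u, a0) \<in> r)" by blast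
      then have ub: "al \<xi> \<in> Field r \<and> (\<forall>u\<in>w ` underS r \<xi>. (u, al \<xi>) \<in> r)"
        unfolding al_def ub_def by (rule someI)
      have pF: "(al \<xi>, F (al \<xi>)) \<in> Field r \<times> Field r" using ub F by blast
      have "\<exists>\<gamma>. \<gamma> \<in> Field r \<and> al \<xi> \<in> underS r \<gamma> \<and> dd \<gamma> = (al \<xi>, F (al \<xi>))"
        using fib[OF pF conjunct1[OF ub]] by blast
      then have cd: "code (al \<xi>) \<in> Field r \<and> al \<xi> \<in> underS r (code (al \<xi>)) \<and> dd (code (al \<xi>)) = (al \<xi>, F (al \<xi>))"
        unfolding code_def by (rule someI_ex)
      have "w \<xi> = code (al \<xi>)" unfolding al_def by (rule weq)
      then show ?case using ub cd by auto
    qed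
    have mono: "w \<zeta> \<in> underS r (w \<xi>)" if "\<xi> \<in> Field r" "\<zeta> \<in> underS r \<xi>" for \<xi> \<zeta>
      using P[OF that(1)] that(2) le_lt_trans[OF wo] by blast
    have inj: "inj_on w (Field r)"
    proof (rule inj_onI)
      fix x y assume x: "x \<in> Field r" and y: "y \<in> Field r" and eq: "w x = w y"
      show "x = y"
      proof (rule ccontr)
        assume ne: "x \<noteq> y"
        from lt_total[OF wo x y] ne have "x \<in> underS r y \<or> y \<in> underS r x" unfolding underS_def by blast
        then show False using mono x y eq unfolding underS_def by fastforce
      qed
    qed
    have bk: "xa \<in> underS r xb" if "xa \<in> Field r" "xb \<in> Field r" "w xa \<in> underS r (w xb)" for xa xb
    proof -
      from lt_total[OF wo that(2) that(1)] have "(xb, xa) \<in> r \<or> xa \<in> underS r xb" .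
      moreover have "\<not> (xb, xa) \<in> r"
      proof
        assume h: "(xb, xa) \<in> r"
        show False
        proof (cases "xb = xa")
          case True then show False using that(3) unfolding underS_def by blast
        next
          case False
          then have "xb \<in> underS r xa" using h unfolding underS_def by blast
          then have "w xb \<in> underS r (w xa)" using mono that(1) by blast
          then show False using lt_asym[OF wo that(3)] unfolding underS_def by blast
        qed
      qed
      ultimately show ?thesis by blast
    qed
    define W where "W = w ` Field r"
    have WF: "W \<subseteq> Field r" using P unfolding W_def by blast
    have "|W| =o |Field r|" unfolding W_def
    proof -
      have "bij_betw w (Field r) (w ` Field r)" by (rule bij_betw_imageI[OF inj refl])
      then have "\<exists>f. bij_betw f (Field r) (w ` Field r)" by blast
      then have "|Field r| =o |w ` Field r|" by (simp only: card_of_ordIso)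
      then show "|w ` Field r| =o |Field r|" by (rule ordIso_symmetric)
    qed
    then have "|W| =o r" by (rule ordIso_transitive[OF _ card_of_Field_ordIso[OF assms(1)]])
    then have Spos: "{d \<in> Field r. \<exists>i\<in>underS r d. ord_sup_eq r (W \<inter> B d i) d} \<in> ideal_pos r J"
      using Bcl[THEN spec, of W] WF by simp
    let ?S = "{d \<in> Field r. \<exists>i\<in>underS r d. ord_sup_eq r (W \<inter> B d i) d}"
    let ?T = "{d \<in> Field r. \<exists>i\<in>Field nu. \<exists>Z. Z \<subseteq> underS r d \<and> ord_sup_eq r Z d \<and>
            (\<lambda>a. (a, F a)) ` Z \<subseteq> A d i}"
    have ST: "?S \<subseteq> ?T"
    proof
      fix \<delta> assume "\<delta> \<in> ?S"
      then obtain i0 where \<delta>: "\<delta> \<in> Field r" and i0: "i0 \<in> underS r \<delta>"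
        and sup: "ord_sup_eq r (W \<inter> B \<delta> i0) \<delta>" by blast
      have Bs: "B \<delta> i0 \<subseteq> underS r \<delta>" using Bsz[rule_format, OF \<delta> i0] by (rule conjunct1)
      have ex: "\<exists>e. e ` Field nu = underS r \<delta>" using enum[OF \<delta>] i0 by blast
      have eeq: "e \<delta> ` Field nu = underS r \<delta>"
        unfolding e_def by (rule someI_ex[OF ex])
      have "i0 \<in> e \<delta> ` Field nu" unfolding eeq by (rule i0)
      then obtain i where i: "i \<in> Field nu" "e \<delta> i = i0" by (metis imageE)
      define Z where "Z = al ` {\<xi> \<in> Field r. w \<xi> \<in> B \<delta> i0}"
      have Zs: "Z \<subseteq> underS r \<delta>"
      proof
        fix z assume "z \<in> Z"
        then obtain \<xi> where \<xi>: "\<xi> \<in> Field r" "w \<xi> \<in> B \<delta> i0" "z = al \<xi>" unfolding Z_def by blast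
        have h1: "al \<xi> \<in> underS r (w \<xi>)" using P[OF \<xi>(1)] by blast
        have h2: "w \<xi> \<in> underS r \<delta>" using Bs \<xi>(2) by blast
        show "z \<in> underS r \<delta>" unfolding \<xi>(3) by (rule lt_trans[OF wo h1 h2])
      qed
      have "ord_sup_eq r Z \<delta>"
        unfolding ord_sup_eq_def
      proof (intro conjI ballI)
        show "\<delta> \<in> Field r" using \<delta> .
        fix z assume "z \<in> Z" then show "(z, \<delta>) \<in> r" using Zs unfolding underS_def by blast
      next
        fix b assume b: "b \<in> underS r \<delta>"
        obtain g1 where g1: "g1 \<in> W \<inter> B \<delta> i0" "(b, g1) \<in> r" "b \<noteq> g1"
          using sup b unfolding ord_sup_eq_def by blast
        have "g1 \<in> underS r \<delta>" using g1 Bs by blast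
        then obtain g2 where g2: "g2 \<in> W \<inter> B \<delta> i0" "(g1, g2) \<in> r" "g1 \<noteq> g2"
          using sup unfolding ord_sup_eq_def by blast
        obtain xa where xa: "xa \<in> Field r" "g1 = w xa" using g1 unfolding W_def by blast
        obtain xb where xb: "xb \<in> Field r" "g2 = w xb" using g2 unfolding W_def by blast
        have "xa \<in> underS r xb" using bk xa xb g2 unfolding underS_def by blast
        then have le: "(g1, al xb) \<in> r" using P[OF xb(1)] unfolding xa(2) by blast
        have "b \<in> underS r g1" using g1 unfolding underS_def by blast
        then have "b \<in> underS r (al xb)" using lt_le_trans[OF wo _ le] by blast
        moreover have "al xb \<in> Z" unfolding Z_def using xb g2 by blast
        ultimately show "\<exists>g\<in>Z. (b, g) \<in> r \<and> b \<noteq> g" unfolding underS_def by blast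
      qed
      moreover have "(\<lambda>a. (a, F a)) ` Z \<subseteq> A \<delta> i"
      proof
        fix y assume "y \<in> (\<lambda>a. (a, F a)) ` Z"
        then obtain \<xi> where \<xi>: "\<xi> \<in> Field r" "w \<xi> \<in> B \<delta> i0" "y = (al \<xi>, F (al \<xi>))"
          unfolding Z_def by blast
        have "y = dd (w \<xi>)" using P[OF \<xi>(1)] \<xi>(3) by simp
        moreover have "y \<in> Field r \<times> Field r" using P[OF \<xi>(1)] \<xi>(3) F by blast
        ultimately show "y \<in> A \<delta> i" unfolding A_def using i i0 \<xi>(2) by auto
      qed
      ultimately show "\<delta> \<in> ?T" using \<delta> i Zs by blast
    qed
    have "?T \<notin> J"
    proof
      assume "?T \<in> J"
      then have "?S \<in> J" using Jsub ST by blast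
      then show False using Spos unfolding ideal_pos_def by blast
    qed
    then show "?T \<in> ideal_pos r J" unfolding ideal_pos_def by blast
  qed
qed

end
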